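(* Let $\Sigma\in\mathbb{R}^{p\times p}$ with $\Sigma\succ0$, $\theta_0\in\mathbb{R}^p$, $S=\mathrm{supp}(\theta_0)$, and for $\xi>0$ let $\widehat\theta^\infty(\xi)$ be the unique minimizer of $\theta\mapsto\frac12\langle\theta-\theta_0,\Sigma(\theta-\theta_0)\rangle+\xi\|\theta\|_1$. Then there exist $\xi_0=\xi_0(\Sigma,S,\theta_0)>0$, $T_0\subseteq[p]$, $v_0\in\{-1,0,+1\}^p$ such that for all $\xi\in(0,\xi_0)$, $\mathrm{sign}(\widehat\theta^\infty(\xi))=v_0$ and $\mathrm{supp}(\widehat\theta^\infty(\xi))=\mathrm{supp}(v_0)=T_0$. Further $T_0\supseteq S$, $v_{0,S}=\mathrm{sign}(\theta_{0,S})$, and $\xi_0=\min_{i\in S}\big|\theta_{0,i}/[\Sigma_{T_0,T_0}^{-1}v_{0,T_0}]_i\big|$.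
   Context: $\mathrm{sign}(u)_i=+1,0,-1$ according as $u_i>0,=0,<0$; $A_{I,J}$ is the submatrix with rows in $I$, columns in $J$; $A_{I,I}^{-1}=(A_{I,I})^{-1}$; $v_I$ is restriction to $I$. *)

theory Defs
  imports "HOL-Analysis.Analysis" "HOL-Library.Extended_Real"
begin

definition pos_def :: "real^'p^'p \<Rightarrow> bool" where
  "pos_def A \<longleftrightarrow> transpose A = A \<and> (\<forall>x. x \<noteq> 0 \<longrightarrow> x \<bullet> (A *v x) > 0)"

definition supp :: "real^'p \<Rightarrow> 'p set" where
  "supp x = {i. x $ i \<noteq> 0}"

definition sign_vec :: "real^'p \<Rightarrow> real^'p" where
  "sign_vec x = (\<chi> i. sgn (x $ i))"

definition l1norm :: "real^'p \<Rightarrow> real" where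
  "l1norm x = (\<Sum>i\<in>UNIV. \<bar>x $ i\<bar>)"

definition lasso_obj :: "real^'p^'p \<Rightarrow> real^'p \<Rightarrow> real \<Rightarrow> real^'p \<Rightarrow> real" where
  "lasso_obj S \<theta>0 \<xi> \<theta> = (1/2) * ((\<theta> - \<theta>0) \<bullet> (S *v (\<theta> - \<theta>0))) + \<xi> * l1norm \<theta>"

definition lasso_inf :: "real^'p^'p \<Rightarrow> real^'p \<Rightarrow> real \<Rightarrow> real^'p" where
  "lasso_inf S \<theta>0 \<xi> = (THE \<theta>. \<forall>\<theta>'. lasso_obj S \<theta>0 \<xi> \<theta> \<le> lasso_obj S \<theta>0 \<xi> \<theta>')"

text \<open>Inverse of the principal submatrix A_{T,T}, with rows/columns labelled by the
original indices in T (entries outside T x T set to 0).\<close>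
definition sub_inv :: "real^'p^'p \<Rightarrow> 'p set \<Rightarrow> 'p \<Rightarrow> 'p \<Rightarrow> real" where
  "sub_inv A T = (THE B. (\<forall>i j. (i \<notin> T \<or> j \<notin> T) \<longrightarrow> B i j = 0) \<and>
      (\<forall>i\<in>T. \<forall>j\<in>T. (\<Sum>k\<in>T. A $ i $ k * B k j) = (if i = j then 1 else 0)) \<and>
      (\<forall>i\<in>T. \<forall>j\<in>T. (\<Sum>k\<in>T. B i k * A $ k $ j) = (if i = j then 1 else 0)))"

definition sub_inv_apply :: "real^'p^'p \<Rightarrow> 'p set \<Rightarrow> real^'p \<Rightarrow> 'p \<Rightarrow> real" where
  "sub_inv_apply A T v i = (\<Sum>j\<in>T. sub_inv A T i j * v $ j)"

end

theory Submission
  imports Defs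
begin


lemma onesided:
  fixes c b eps :: real
  assumes "eps > 0" "\<And>t. 0 < t \<Longrightarrow> t < eps \<Longrightarrow> 0 \<le> c*t + b*t^2"
  shows "0 \<le> c"
proof (rule ccontr)
  assume nc: "\<not> 0 \<le> c"
  define t where "t = min (eps/2) (-c/(2*\<bar>b\<bar>+1))"
  have d: "2*\<bar>b\<bar>+1 > 0" by simp
  have t0: "0<t" "t<eps" using nc assms(1) d by (auto simp: t_def divide_neg_pos)
  have "t \<le> (-c)/(2*\<bar>b\<bar>+1)" by (simp add: t_def)
  hence "t*(2*\<bar>b\<bar>+1) \<le> -c" using d by (simp only: pos_le_divide_eq)
  hence "\<bar>b\<bar>*t < -c/2" using t0 by (simp add: algebra_simps)
  moreover have "b*t \<le> \<bar>b\<bar>*t" using t0 by (simp add: mult_right_mono)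
  ultimately have "c + b*t < 0" using nc by linarith
  hence "t*(c+b*t) < 0" using t0 by (simp add: mult_pos_neg)
  hence "c*t + b*t^2 < 0" by (simp add: algebra_simps power2_eq_square)
  with assms(2)[OF t0] show False by simp
qed

lemma twosided:
  fixes c b eps :: real
  assumes "eps > 0" "\<And>t. \<bar>t\<bar> < eps \<Longrightarrow> 0 \<le> c*t + b*t^2"
  shows "c = 0"
proof -
  have "0 \<le> c" using onesided[of eps c b] assms by auto
  moreover have "0 \<le> -c"
  proof (rule onesided[of eps "-c" b])
    fix t :: real assume "0<t" "t<eps"
    hence "0 \<le> c*(-t) + b*(-t)^2" using assms(2)[of "-t"] by simp
    thus "0 \<le> -c*t + b*t^2" by simp
  qed (use assms in auto)
  ultimately show ?thesis by simp
qed

definition qf :: "real^'p^'p \<Rightarrow> real^'p \<Rightarrow> real" where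
  "qf A x = x \<bullet> (A *v x)"

lemma sym_inner:
  assumes "transpose A = A"
  shows "x \<bullet> (A *v y) = y \<bullet> (A *v (x::real^'p))"
proof -
  have "y \<bullet> (A *v x) = (y v* A) \<bullet> x" by (simp add: dot_lmul_matrix)
  also have "y v* A = transpose A *v y" by simp
  also have "\<dots> = A *v y" using assms by simp
  finally show ?thesis by (simp add: inner_commute)
qed

lemma qf_add:
  assumes "transpose A = A"
  shows "qf A (x + y) = qf A x + 2 * (x \<bullet> (A *v y)) + qf A y"
  using sym_inner[OF assms, of x y]
  by (simp add: qf_def matrix_vector_right_distrib inner_add_left inner_add_right)

lemma qf_scale: "qf A (t *\<^sub>R x) = t^2 * qf A x"
  by (simp add: qf_def matrix_vector_mult_scaleR power2_eq_square)

lemma qf_cont: "continuous_on X (qf A)"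
  unfolding qf_def
  by (intro continuous_intros linear_continuous_on) (simp add: linear_linear[symmetric])


lemma qf_lower:
  assumes pd: "pos_def A"
  obtains l where "l > 0" "\<And>x. qf A x \<ge> l * (norm x)^2"
proof -
  have ne: "sphere (0::real^'p) 1 \<noteq> {}"
    by (metis empty_iff mem_sphere_0 norm_axis_1)
  obtain x0 where x0: "x0 \<in> sphere 0 1" "\<And>y. y \<in> sphere 0 1 \<Longrightarrow> qf A x0 \<le> qf A y"
    using continuous_attains_inf[OF compact_sphere ne qf_cont] by blast
  have "x0 \<noteq> 0" using x0(1) by auto
  hence lpos: "qf A x0 > 0" using pd by (simp add: pos_def_def qf_def)
  have "qf A x \<ge> qf A x0 * (norm x)^2" for x
  proof (cases "x = 0")
    case True thus ?thesis by (simp add: qf_def)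
  next
    case False
    hence n: "norm x > 0" by simp
    have "(1/norm x) *\<^sub>R x \<in> sphere 0 1" using n by simp
    hence "qf A x0 \<le> qf A ((1/norm x) *\<^sub>R x)" by (rule x0(2))
    also have "\<dots> = qf A x / (norm x)^2" by (simp add: qf_scale power_divide)
    finally show ?thesis using n by (simp add: pos_le_divide_eq)
  qed
  thus ?thesis using that lpos by blast
qed

lemma sum_abs_le: "(\<Sum>j\<in>UNIV. \<bar>(x::real^'p) $ j\<bar>) \<le> real CARD('p) * norm x"
proof -
  have "(\<Sum>j\<in>UNIV. \<bar>x $ j\<bar>) \<le> (\<Sum>j\<in>(UNIV::'p set). norm x)"
    by (intro sum_mono component_le_norm_cart)
  thus ?thesis by simp
qed

lemma exists_min:
  fixes \<phi> :: "'p::finite \<Rightarrow> real \<Rightarrow> real"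
  assumes pd: "pos_def A" and phi: "\<And>j x. \<phi> j x \<ge> -\<bar>x\<bar>" "\<And>j. continuous_on UNIV (\<phi> j)"
    and phi0: "\<And>j. \<phi> j 0 = 0"
  shows "\<exists>z. \<forall>w. 1/2 * qf A z + (\<Sum>j\<in>UNIV. \<phi> j (z$j)) \<le> 1/2 * qf A w + (\<Sum>j\<in>UNIV. \<phi> j (w$j))"
proof -
  define F where "F w = 1/2 * qf A w + (\<Sum>j\<in>UNIV. \<phi> j (w$j))" for w
  obtain l where l: "l > 0" "\<And>x. qf A x \<ge> l * (norm x)^2" using qf_lower[OF pd] by blast
  define C where "C = real CARD('p)"
  define R where "R = 2*C/l + 1"
  have "2*C/l \<ge> 0" using l(1) by (simp add: C_def)
  hence Rpos: "R > 0" by (simp add: R_def)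
  have lowF: "F w \<ge> l/2 * (norm w)^2 - C * norm w" for w
  proof -
    have "(\<Sum>j\<in>UNIV. \<phi> j (w$j)) \<ge> (\<Sum>j\<in>UNIV. -\<bar>w$j\<bar>)" by (intro sum_mono phi)
    moreover have "(\<Sum>j\<in>UNIV. -\<bar>w$j\<bar>) \<ge> - (C * norm w)"
      using sum_abs_le[of w] by (simp add: sum_negf C_def)
    ultimately show ?thesis using l(2)[of w] by (simp add: F_def)
  qed
  have F0: "F 0 = 0" by (simp add: F_def qf_def phi0)
  have outside: "F w > 0" if "norm w > R" for w
  proof -
    have "l * norm w > 2*C" using that l by (simp add: R_def field_simps)
    hence "norm w * (l/2 * norm w - C) > 0" using that Rpos by (intro mult_pos_pos) auto
    hence "l/2 * (norm w)^2 - C * norm w > 0" by (simp add: algebra_simps power2_eq_square)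
    thus ?thesis using lowF[of w] by linarith
  qed
  have cF: "continuous_on (cball 0 R) F"
    unfolding F_def
    by (intro continuous_intros qf_cont continuous_on_compose2[OF phi(2)]) auto
  have "cball (0::real^'p) R \<noteq> {}" using Rpos by simp
  then obtain z where z: "z \<in> cball 0 R" "\<And>y. y \<in> cball 0 R \<Longrightarrow> F z \<le> F y"
    using continuous_attains_inf[OF compact_cball _ cF] by blast
  have "0 \<in> cball (0::real^'p) R" using Rpos by simp
  hence Fz: "F z \<le> 0" using z(2) F0 by fastforce
  have "F z \<le> F w" for w
  proof (cases "w \<in> cball 0 R")
    case True thus ?thesis by (rule z(2))
  next
    case False thus ?thesis using outside[of w] Fz by auto
  qed
  thus ?thesis unfolding F_def by blast
qed


lemma sum_upd:
  fixes \<phi> :: "'p::finite \<Rightarrow> real \<Rightarrow> real"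
  shows "(\<Sum>j\<in>UNIV. \<phi> j ((z + t *\<^sub>R axis i 1)$j)) = (\<Sum>j\<in>UNIV. \<phi> j (z$j)) + (\<phi> i (z$i + t) - \<phi> i (z$i))"
proof -
  have "(\<Sum>j\<in>UNIV. \<phi> j ((z + t *\<^sub>R axis i 1)$j)) - (\<Sum>j\<in>UNIV. \<phi> j (z$j))
      = (\<Sum>j\<in>UNIV. \<phi> j ((z + t *\<^sub>R axis i 1)$j) - \<phi> j (z$j))"
    by (simp add: sum_subtractf)
  also have "\<dots> = (\<Sum>j\<in>UNIV. if j = i then \<phi> i (z$i + t) - \<phi> i (z$i) else 0)"
    by (intro sum.cong) (auto simp: axis_def)
  also have "\<dots> = \<phi> i (z$i + t) - \<phi> i (z$i)" by simp
  finally show ?thesis by simp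
qed

lemma kkt_coord:
  fixes \<phi> :: "'p::finite \<Rightarrow> real \<Rightarrow> real"
  assumes sym: "transpose A = A"
    and min: "\<forall>w. 1/2 * qf A z + (\<Sum>j\<in>UNIV. \<phi> j (z$j)) \<le> 1/2 * qf A w + (\<Sum>j\<in>UNIV. \<phi> j (w$j))"
  shows "0 \<le> (A *v z)$i * t + (qf A (axis i 1) / 2) * t^2 + (\<phi> i (z$i + t) - \<phi> i (z$i))"
proof -
  have q: "qf A (z + t *\<^sub>R axis i 1) = qf A z + 2 * t * (A *v z)$i + t^2 * qf A (axis i 1)"
    using qf_add[OF sym, of z "t *\<^sub>R axis i 1"] sym_inner[OF sym, of z "axis i 1"]
    by (simp add: qf_scale matrix_vector_mult_scaleR inner_axis inner_axis')
  show ?thesis using min[rule_format, of "z + t *\<^sub>R axis i 1"] unfolding sum_upd q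
    by (simp add: algebra_simps)
qed


definition subinvP :: "real^'p^'p \<Rightarrow> 'p set \<Rightarrow> ('p \<Rightarrow> 'p \<Rightarrow> real) \<Rightarrow> bool" where
  "subinvP A T B \<longleftrightarrow> (\<forall>i j. (i \<notin> T \<or> j \<notin> T) \<longrightarrow> B i j = 0) \<and>
      (\<forall>i\<in>T. \<forall>j\<in>T. (\<Sum>k\<in>T. A $ i $ k * B k j) = (if i = j then 1 else 0)) \<and>
      (\<forall>i\<in>T. \<forall>j\<in>T. (\<Sum>k\<in>T. B i k * A $ k $ j) = (if i = j then 1 else 0))"

lemma sub_inv_eq: "sub_inv A T = (THE B. subinvP A T B)"
  unfolding sub_inv_def subinvP_def by simp

lemma subinv_unique:
  fixes A :: "real^'p^'p"
  assumes "subinvP A T B1" "subinvP A T B2"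
  shows "B1 = B2"
proof (intro ext)
  fix i j
  show "B1 i j = B2 i j"
  proof (cases "i \<in> T \<and> j \<in> T")
    case False thus ?thesis using assms by (auto simp: subinvP_def)
  next
    case True
    have fT: "finite T" by simp
    have "B1 i j = (\<Sum>k\<in>T. B1 i k * (if k = j then 1 else 0))"
      using True by (simp add: if_distrib sum.delta' cong: if_cong)
    also have "\<dots> = (\<Sum>k\<in>T. B1 i k * (\<Sum>m\<in>T. A $ k $ m * B2 m j))"
      using assms(2) True by (intro sum.cong) (auto simp: subinvP_def)
    also have "\<dots> = (\<Sum>k\<in>T. \<Sum>m\<in>T. B1 i k * A $ k $ m * B2 m j)"
      by (simp add: sum_distrib_left mult.assoc)
    also have "\<dots> = (\<Sum>m\<in>T. \<Sum>k\<in>T. B1 i k * A $ k $ m * B2 m j)"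
      by (rule sum.swap)
    also have "\<dots> = (\<Sum>m\<in>T. (\<Sum>k\<in>T. B1 i k * A $ k $ m) * B2 m j)"
      by (simp add: sum_distrib_right)
    also have "\<dots> = (\<Sum>m\<in>T. (if i = m then 1 else 0) * B2 m j)"
      using assms(1) True by (intro sum.cong) (auto simp: subinvP_def)
    also have "\<dots> = (\<Sum>m\<in>T. if m = i then B2 m j else 0)" by (intro sum.cong) auto
    also have "\<dots> = B2 i j" using True by simp
    finally show ?thesis .
  qed
qed

lemma subinv_exists:
  fixes A :: "real^'p^'p"
  assumes pd: "pos_def A"
  shows "\<exists>B. subinvP A T B"
proof -
  define A' :: "real^'p^'p" where "A' = (\<chi> i j. if i \<in> T \<and> j \<in> T then A$i$j else if i = j then 1 else 0)"
  have quad: "x \<bullet> (A' *v x) = (\<chi> i. if i \<in> T then x$i else 0) \<bullet> (A *v (\<chi> i. if i \<in> T then x$i else 0))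
       + (\<Sum>i\<in>UNIV. if i \<in> T then 0 else (x$i)^2)" for x
  proof -
    have "x \<bullet> (A' *v x) = (\<Sum>i\<in>UNIV. \<Sum>j\<in>UNIV. x$i * A'$i$j * x$j)"
      by (simp add: inner_vec_def matrix_vector_mult_def sum_distrib_left mult.assoc)
    also have "\<dots> = (\<Sum>i\<in>UNIV. (\<Sum>j\<in>UNIV. (if i \<in> T then x$i else 0) * A$i$j * (if j \<in> T then x$j else 0))
                        + (if i \<in> T then 0 else (x$i)^2))"
    proof (intro sum.cong refl)
      fix i
      show "(\<Sum>j\<in>UNIV. x$i * A'$i$j * x$j) = (\<Sum>j\<in>UNIV. (if i \<in> T then x$i else 0) * A$i$j * (if j \<in> T then x$j else 0))
                        + (if i \<in> T then 0 else (x$i)^2)"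
      proof (cases "i \<in> T")
        case True thus ?thesis by (simp, intro sum.cong) (auto simp: A'_def)
      next
        case False
        have "(\<Sum>j\<in>UNIV. x$i * A'$i$j * x$j) = (\<Sum>j\<in>UNIV. if j = i then (x$i)^2 else 0)"
          using False by (intro sum.cong) (auto simp: A'_def power2_eq_square)
        thus ?thesis using False by simp
      qed
    qed
    also have "\<dots> = (\<chi> i. if i \<in> T then x$i else 0) \<bullet> (A *v (\<chi> i. if i \<in> T then x$i else 0))
       + (\<Sum>i\<in>UNIV. if i \<in> T then 0 else (x$i)^2)"
      by (simp add: sum.distrib inner_vec_def matrix_vector_mult_def sum_distrib_left mult.assoc)
    finally show ?thesis .
  qed
  have ker: "\<forall>x. A' *v x = 0 \<longrightarrow> x = 0"
  proof (intro allI impI)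
    fix x assume ax: "A' *v x = 0"
    define y where "y = (\<chi> i. if i \<in> T then x$i else 0)"
    have q0: "y \<bullet> (A *v y) + (\<Sum>i\<in>UNIV. if i \<in> T then 0 else (x$i)^2) = 0"
      using quad[of x] ax by (simp add: y_def)
    have s0: "(\<Sum>i\<in>UNIV. if i \<in> T then 0 else (x$i)^2) \<ge> 0" by (intro sum_nonneg) auto
    have y0: "y \<bullet> (A *v y) \<ge> 0" using pd unfolding pos_def_def
      by (cases "y = 0") (auto intro: less_imp_le)
    have "y \<bullet> (A *v y) = 0" using q0 s0 y0 by linarith
    hence "y = 0" using pd unfolding pos_def_def by (metis less_irrefl)
    moreover have "(\<Sum>i\<in>UNIV. if i \<in> T then 0 else (x$i)^2) = 0" using q0 s0 y0 by linarith
    hence "\<forall>i\<in>UNIV. (if i \<in> T then 0 else (x$i)^2) = 0"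
      by (subst (asm) sum_nonneg_eq_0_iff) auto
    ultimately show "x = 0"
      by (simp add: vec_eq_iff y_def) (metis power_eq_0_iff zero_neq_numeral)
  qed
  obtain B where B: "B ** A' = mat 1" using ker matrix_left_invertible_ker by blast
  hence B2: "A' ** B = mat 1" using matrix_left_right_inverse by blast
  define Bi where "Bi i j = (if i \<in> T \<and> j \<in> T then B$i$j else 0)" for i j
  have "subinvP A T Bi"
    unfolding subinvP_def
  proof (intro conjI ballI allI impI)
    fix i j assume "i \<notin> T \<or> j \<notin> T" thus "Bi i j = 0" by (auto simp: Bi_def)
  next
    fix i j assume ij: "i \<in> T" "j \<in> T"
    have "(\<Sum>k\<in>T. A $ i $ k * Bi k j) = (\<Sum>k\<in>UNIV. A' $ i $ k * B $ k $ j)"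
      by (rule sum.mono_neutral_cong_left) (use ij in \<open>auto simp: A'_def Bi_def\<close>)
    also have "\<dots> = (A' ** B) $ i $ j" by (simp add: matrix_matrix_mult_def)
    finally show "(\<Sum>k\<in>T. A $ i $ k * Bi k j) = (if i = j then 1 else 0)" using B2 by (simp add: mat_def)
  next
    fix i j assume ij: "i \<in> T" "j \<in> T"
    have "(\<Sum>k\<in>T. Bi i k * A $ k $ j) = (\<Sum>k\<in>UNIV. B $ i $ k * A' $ k $ j)"
      by (rule sum.mono_neutral_cong_left) (use ij in \<open>auto simp: A'_def Bi_def\<close>)
    also have "\<dots> = (B ** A') $ i $ j" by (simp add: matrix_matrix_mult_def)
    finally show "(\<Sum>k\<in>T. Bi i k * A $ k $ j) = (if i = j then 1 else 0)" using B by (simp add: mat_def)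
  qed
  thus ?thesis by blast
qed

lemma sub_inv_P:
  assumes "pos_def A"
  shows "subinvP A T (sub_inv A T)"
  unfolding sub_inv_eq
  using subinv_exists[OF assms] subinv_unique by (metis theI)

lemma sub_inv_apply_eq:
  fixes A :: "real^'p^'p"
  assumes pd: "pos_def A" and zT: "\<And>j. j \<notin> T \<Longrightarrow> z$j = 0"
    and Az: "\<And>i. i \<in> T \<Longrightarrow> (A *v z)$i = - v$i" and iT: "i \<in> T"
  shows "sub_inv_apply A T v i = - z$i"
proof -
  let ?B = "sub_inv A T"
  have P: "subinvP A T ?B" by (rule sub_inv_P[OF pd])
  have Azk: "(A *v z)$j = (\<Sum>k\<in>T. A$j$k * z$k)" for j
    unfolding matrix_vector_mult_def
    by (simp, rule sum.mono_neutral_cong_right) (auto simp: zT)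
  have "sub_inv_apply A T v i = (\<Sum>j\<in>T. ?B i j * v$j)" by (simp add: sub_inv_apply_def)
  also have "\<dots> = - (\<Sum>j\<in>T. ?B i j * (\<Sum>k\<in>T. A$j$k * z$k))"
    using Az by (simp add: Azk[symmetric] sum_negf[symmetric])
  also have "(\<Sum>j\<in>T. ?B i j * (\<Sum>k\<in>T. A$j$k * z$k)) = (\<Sum>j\<in>T. \<Sum>k\<in>T. ?B i j * A$j$k * z$k)"
    by (simp add: sum_distrib_left mult.assoc)
  also have "\<dots> = (\<Sum>k\<in>T. \<Sum>j\<in>T. ?B i j * A$j$k * z$k)" by (rule sum.swap)
  also have "\<dots> = (\<Sum>k\<in>T. (\<Sum>j\<in>T. ?B i j * A$j$k) * z$k)" by (simp add: sum_distrib_right)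
  also have "\<dots> = (\<Sum>k\<in>T. (if i = k then 1 else 0) * z$k)"
    using P iT by (intro sum.cong) (auto simp: subinvP_def)
  also have "\<dots> = (\<Sum>k\<in>T. if k = i then z$k else 0)" by (intro sum.cong) auto
  also have "\<dots> = z$i" using iT by simp
  finally show ?thesis .
qed


lemma subgrad:
  fixes h x y :: real
  assumes "\<bar>h\<bar> \<le> 1" "x \<noteq> 0 \<Longrightarrow> h = sgn x"
  shows "h * (y - x) \<le> \<bar>y\<bar> - \<bar>x\<bar>"
proof (cases "x = 0")
  case True
  have "h * y \<le> \<bar>h * y\<bar>" by simp
  also have "\<dots> \<le> \<bar>y\<bar>" using assms(1) by (simp add: abs_mult mult_left_le_one_le)
  finally show ?thesis using True by simp
next
  case False
  hence h: "h = sgn x" using assms(2) by simp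
  have "h * x = \<bar>x\<bar>" using h by (simp add: sgn_mult_abs abs_sgn mult.commute)
  moreover have "h * y \<le> \<bar>y\<bar>"
  proof -
    have "h * y \<le> \<bar>h * y\<bar>" by simp
    also have "\<dots> \<le> \<bar>y\<bar>" using h by (simp add: abs_mult abs_sgn_eq)
    finally show ?thesis .
  qed
  ultimately show ?thesis by (simp add: algebra_simps)
qed

lemma sgn_pert:
  fixes c d :: real
  assumes "\<bar>d\<bar> < \<bar>c\<bar>"
  shows "sgn (c + d) = sgn c"
  using assms by (cases "c > 0") (auto simp: sgn_if)

lemma obj_ineq:
  fixes A :: "real^'p^'p"
  assumes sym: "transpose A = A"
    and hyp: "\<And>i. \<bar>(A *v w)$i\<bar> \<le> 1" "\<And>i. \<theta>$i \<noteq> 0 \<Longrightarrow> -(A *v w)$i = sgn(\<theta>$i)"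
    and th: "\<theta> = \<theta>0 + \<xi> *\<^sub>R w" and xi: "\<xi> > 0"
  shows "lasso_obj A \<theta>0 \<xi> \<theta>' \<ge> lasso_obj A \<theta>0 \<xi> \<theta> + 1/2 * qf A (\<theta>' - \<theta>)"
proof -
  define d where "d = \<theta>' - \<theta>"
  have e1: "\<theta>' - \<theta>0 = \<xi> *\<^sub>R w + d" by (simp add: d_def th)
  have e2: "\<theta> - \<theta>0 = \<xi> *\<^sub>R w" by (simp add: th)
  have q: "qf A (\<xi> *\<^sub>R w + d) = qf A (\<xi> *\<^sub>R w) + 2 * \<xi> * (\<Sum>i\<in>UNIV. d$i * (A *v w)$i) + qf A d"
  proof -
    have "(\<xi> *\<^sub>R w) \<bullet> (A *v d) = \<xi> * (d \<bullet> (A *v w))"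
      using sym_inner[OF sym, of w d] by simp
    also have "d \<bullet> (A *v w) = (\<Sum>i\<in>UNIV. d$i * (A *v w)$i)" by (simp add: inner_vec_def)
    finally show ?thesis using qf_add[OF sym, of "\<xi> *\<^sub>R w" d] by simp
  qed
  have l: "l1norm \<theta>' - l1norm \<theta> \<ge> (\<Sum>i\<in>UNIV. -(A *v w)$i * d$i)"
  proof -
    have "(\<Sum>i\<in>UNIV. -(A *v w)$i * d$i) \<le> (\<Sum>i\<in>UNIV. \<bar>\<theta>'$i\<bar> - \<bar>\<theta>$i\<bar>)"
    proof (intro sum_mono)
      fix i
      show "-(A *v w)$i * d$i \<le> \<bar>\<theta>'$i\<bar> - \<bar>\<theta>$i\<bar>"
        using subgrad[of "-(A *v w)$i" "\<theta>$i" "\<theta>'$i"] hyp[of i] by (simp add: d_def)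
    qed
    thus ?thesis by (simp add: l1norm_def sum_subtractf)
  qed
  have "(\<Sum>i\<in>UNIV. -(A *v w)$i * d$i) = - (\<Sum>i\<in>UNIV. d$i * (A *v w)$i)"
    by (simp add: sum_negf[symmetric] mult.commute)
  hence H: "\<xi> * l1norm \<theta>' - \<xi> * l1norm \<theta> \<ge> - (\<xi> * (\<Sum>i\<in>UNIV. d$i * (A *v w)$i))"
    using l xi by (metis mult_left_mono less_imp_le mult_minus_right right_diff_distrib)
  have o1: "lasso_obj A \<theta>0 \<xi> \<theta>' = 1/2 * (qf A (\<xi> *\<^sub>R w) + 2 * \<xi> * (\<Sum>i\<in>UNIV. d$i * (A *v w)$i) + qf A d) + \<xi> * l1norm \<theta>'"
    unfolding lasso_obj_def qf_def[symmetric] e1 q ..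
  have o2: "lasso_obj A \<theta>0 \<xi> \<theta> = 1/2 * qf A (\<xi> *\<^sub>R w) + \<xi> * l1norm \<theta>"
    unfolding lasso_obj_def qf_def[symmetric] e2 ..
  show ?thesis unfolding o1 o2 d_def[symmetric] using H by (simp only: distrib_left)
qed


lemma abs_pert: "\<bar>t\<bar> < \<bar>x\<bar> \<Longrightarrow> \<bar>x + t\<bar> - \<bar>x\<bar> = sgn x * (t::real)"
  by (cases "x > 0") (auto simp: sgn_if)

theorem lemma3p2:
  fixes \<Sigma> :: "real^'p^'p" and \<theta>0 :: "real^'p"
  assumes "pos_def \<Sigma>"
  shows "\<exists>(\<xi>0::ereal) (T0::'p set) (v0::real^'p).
           \<xi>0 > 0 \<and> (\<forall>i. v0 $ i \<in> {-1, 0, 1}) \<and>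
           (\<forall>\<xi>::real. 0 < \<xi> \<and> ereal \<xi> < \<xi>0 \<longrightarrow>
               sign_vec (lasso_inf \<Sigma> \<theta>0 \<xi>) = v0 \<and>
               supp (lasso_inf \<Sigma> \<theta>0 \<xi>) = supp v0 \<and> supp v0 = T0) \<and>
           supp \<theta>0 \<subseteq> T0 \<and>
           (\<forall>i\<in>supp \<theta>0. v0 $ i = sgn (\<theta>0 $ i)) \<and>
           \<xi>0 = (INF i\<in>supp \<theta>0.
                   (if sub_inv_apply \<Sigma> T0 v0 i = 0 then \<infinity>
                    else ereal \<bar>\<theta>0 $ i / sub_inv_apply \<Sigma> T0 v0 i\<bar>))"
proof -
  have sym: "transpose \<Sigma> = \<Sigma>" using assms by (simp add: pos_def_def)
  have qf0: "qf \<Sigma> x \<ge> 0" for x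
    using assms unfolding pos_def_def qf_def by (cases "x = 0") (auto intro: less_imp_le)
  define S where "S = supp \<theta>0"
  have memS: "i \<in> S \<longleftrightarrow> \<theta>0$i \<noteq> 0" for i by (simp add: S_def supp_def)
  define \<phi> where "\<phi> j x = (if j \<in> S then sgn (\<theta>0$j) * x else \<bar>x\<bar>)" for j x
  have phi1: "\<phi> j x \<ge> -\<bar>x\<bar>" for j x
  proof -
    have "\<bar>sgn (\<theta>0$j) * x\<bar> \<le> \<bar>x\<bar>" by (simp add: abs_mult abs_sgn_eq)
    thus ?thesis by (auto simp: \<phi>_def)
  qed
  have phi2: "continuous_on UNIV (\<phi> j)" for j
    by (cases "j \<in> S") (auto simp: \<phi>_def intro!: continuous_intros)
  have phi0: "\<phi> j 0 = 0" for j by (simp add: \<phi>_def)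
  obtain z where zmin: "\<forall>w. 1/2 * qf \<Sigma> z + (\<Sum>j\<in>UNIV. \<phi> j (z$j)) \<le> 1/2 * qf \<Sigma> w + (\<Sum>j\<in>UNIV. \<phi> j (w$j))"
    using exists_min[where \<phi>=\<phi> and A=\<Sigma>, OF assms] phi1 phi2 phi0 by blast
  have K: "0 \<le> (\<Sigma> *v z)$i * t + (qf \<Sigma> (axis i 1) / 2) * t^2 + (\<phi> i (z$i + t) - \<phi> i (z$i))" for i t
    using kkt_coord[OF sym zmin] .
  have K1: "(\<Sigma> *v z)$i = - sgn (\<theta>0$i)" if iS: "i \<in> S" for i
  proof -
    have "(\<Sigma> *v z)$i + sgn (\<theta>0$i) = 0"
    proof (rule twosided[of 1])
      fix t :: real
      have "\<phi> i (z$i + t) - \<phi> i (z$i) = sgn (\<theta>0$i) * t" by (simp add: \<phi>_def iS algebra_simps)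
      thus "0 \<le> ((\<Sigma> *v z)$i + sgn (\<theta>0$i)) * t + (qf \<Sigma> (axis i 1) / 2) * t^2"
        using K[of i t] unfolding distrib_right by linarith
    qed simp
    thus ?thesis by linarith
  qed
  have K2: "(\<Sigma> *v z)$i = - sgn (z$i)" if iS: "i \<notin> S" and zi: "z$i \<noteq> 0" for i
  proof -
    have "(\<Sigma> *v z)$i + sgn (z$i) = 0"
    proof (rule twosided[of "\<bar>z$i\<bar>"])
      fix t :: real assume "\<bar>t\<bar> < \<bar>z$i\<bar>"
      hence "\<phi> i (z$i + t) - \<phi> i (z$i) = sgn (z$i) * t" by (simp add: \<phi>_def iS abs_pert)
      thus "0 \<le> ((\<Sigma> *v z)$i + sgn (z$i)) * t + (qf \<Sigma> (axis i 1) / 2) * t^2"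
        using K[of i t] unfolding distrib_right by linarith
    qed (use zi in simp)
    thus ?thesis by linarith
  qed
  have K3: "\<bar>(\<Sigma> *v z)$i\<bar> \<le> 1" if iS: "i \<notin> S" and zi: "z$i = 0" for i
  proof -
    have "0 \<le> (\<Sigma> *v z)$i + 1"
    proof (rule onesided[of 1])
      fix t :: real assume "0 < t" "t < 1"
      hence "\<phi> i (z$i + t) - \<phi> i (z$i) = t" by (simp add: \<phi>_def iS zi)
      thus "0 \<le> ((\<Sigma> *v z)$i + 1) * t + (qf \<Sigma> (axis i 1) / 2) * t^2"
        using K[of i t] unfolding distrib_right by linarith
    qed simp
    moreover have "0 \<le> 1 - (\<Sigma> *v z)$i"
    proof (rule onesided[of 1])
      fix t :: real assume "0 < t" "t < 1"
      hence "\<phi> i (z$i + -t) - \<phi> i (z$i) = t" by (simp add: \<phi>_def iS zi)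
      thus "0 \<le> (1 - (\<Sigma> *v z)$i) * t + (qf \<Sigma> (axis i 1) / 2) * t^2"
        using K[of i "-t"] unfolding left_diff_distrib by simp
    qed simp
    ultimately show ?thesis by linarith
  qed
  define v0 where "v0 = (\<chi> i. if i \<in> S then sgn (\<theta>0$i) else sgn (z$i))"
  define T0 where "T0 = supp v0"
  have memT0: "i \<in> T0 \<longleftrightarrow> i \<in> S \<or> z$i \<noteq> 0" for i
    by (auto simp: T0_def supp_def v0_def memS sgn_zero_iff)
  have zT: "z$j = 0" if "j \<notin> T0" for j using that memT0 by blast
  have AzT: "(\<Sigma> *v z)$i = - v0$i" if "i \<in> T0" for i
    using that memT0 K1 K2 by (auto simp: v0_def)
  have U: "sub_inv_apply \<Sigma> T0 v0 i = - z$i" if "i \<in> T0" for i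
    by (rule sub_inv_apply_eq[OF assms zT AzT that])
  have hb: "\<bar>(\<Sigma> *v z)$i\<bar> \<le> 1" for i
  proof (cases "i \<in> T0")
    case True thus ?thesis using AzT[OF True] by (simp add: v0_def abs_sgn_eq)
  next
    case False thus ?thesis using K3 memT0 by blast
  qed
  define f where "f i = (if sub_inv_apply \<Sigma> T0 v0 i = 0 then \<infinity>
                    else ereal \<bar>\<theta>0 $ i / sub_inv_apply \<Sigma> T0 v0 i\<bar>)" for i
  define \<xi>0 where "\<xi>0 = (INF i\<in>S. f i)"
  have fpos: "0 < f i" if "i \<in> S" for i
    using that memS by (auto simp: f_def)
  have xi0pos: "\<xi>0 > 0"
  proof (cases "S = {}")
    case True thus ?thesis by (simp add: \<xi>0_def top_ereal_def)
  next
    case False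
    have "finite (f ` S)" by simp
    thus ?thesis unfolding \<xi>0_def using finite_less_Inf_iff[of "f ` S" 0] False fpos by auto
  qed
  have main: "sign_vec (lasso_inf \<Sigma> \<theta>0 \<xi>) = v0 \<and> supp (lasso_inf \<Sigma> \<theta>0 \<xi>) = supp v0"
    if xi: "0 < \<xi>" "ereal \<xi> < \<xi>0" for \<xi>
  proof -
    define \<theta> where "\<theta> = \<theta>0 + \<xi> *\<^sub>R z"
    have sg: "sgn (\<theta>$i) = v0$i" for i
    proof (cases "i \<in> S")
      case True
      show ?thesis
      proof (cases "z$i = 0")
        case True thus ?thesis using \<open>i \<in> S\<close> by (simp add: \<theta>_def v0_def)
      next
        case False
        have iT: "i \<in> T0" using memT0 \<open>i \<in> S\<close> by blast
        have "\<xi>0 \<le> f i" unfolding \<xi>0_def using \<open>i \<in> S\<close> by (rule INF_lower)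
        also have "f i = ereal \<bar>\<theta>0$i / z$i\<bar>" using U[OF iT] False by (simp add: f_def)
        finally have "\<xi>0 \<le> ereal \<bar>\<theta>0$i / z$i\<bar>" .
        with xi(2) have "ereal \<xi> < ereal \<bar>\<theta>0$i / z$i\<bar>" by (rule less_le_trans)
        hence "\<xi> < \<bar>\<theta>0$i\<bar> / \<bar>z$i\<bar>" by (simp add: abs_divide)
        hence "\<xi> * \<bar>z$i\<bar> < \<bar>\<theta>0$i\<bar>" using False by (simp add: pos_less_divide_eq)
        hence "\<bar>\<xi> * z$i\<bar> < \<bar>\<theta>0$i\<bar>" using xi(1) by (simp add: abs_mult)
        hence "sgn (\<theta>0$i + \<xi> * z$i) = sgn (\<theta>0$i)" by (rule sgn_pert)
        thus ?thesis using \<open>i \<in> S\<close> by (simp add: \<theta>_def v0_def)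
      qed
    next
      case False
      hence "\<theta>0$i = 0" using memS by blast
      thus ?thesis using False xi(1) by (simp add: \<theta>_def v0_def sgn_mult)
    qed
    have hyp2: "-(\<Sigma> *v z)$i = sgn (\<theta>$i)" if "\<theta>$i \<noteq> 0" for i
    proof -
      have "v0$i \<noteq> 0" using sg[of i] that by (metis sgn_zero_iff)
      hence "i \<in> T0" by (simp add: T0_def supp_def)
      thus ?thesis using AzT sg by simp
    qed
    have ineq: "lasso_obj \<Sigma> \<theta>0 \<xi> \<theta>' \<ge> lasso_obj \<Sigma> \<theta>0 \<xi> \<theta> + 1/2 * qf \<Sigma> (\<theta>' - \<theta>)" for \<theta>'
      by (rule obj_ineq[OF sym hb hyp2 \<theta>_def xi(1)])
    have li: "lasso_inf \<Sigma> \<theta>0 \<xi> = \<theta>"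
      unfolding lasso_inf_def
    proof (rule the_equality)
      show "\<forall>\<theta>'. lasso_obj \<Sigma> \<theta>0 \<xi> \<theta> \<le> lasso_obj \<Sigma> \<theta>0 \<xi> \<theta>'"
      proof
        fix \<theta>'
        show "lasso_obj \<Sigma> \<theta>0 \<xi> \<theta> \<le> lasso_obj \<Sigma> \<theta>0 \<xi> \<theta>'"
          using ineq[of \<theta>'] qf0[of "\<theta>' - \<theta>"] by linarith
      qed
    next
      fix \<theta>'' assume "\<forall>\<theta>'. lasso_obj \<Sigma> \<theta>0 \<xi> \<theta>'' \<le> lasso_obj \<Sigma> \<theta>0 \<xi> \<theta>'"
      hence "lasso_obj \<Sigma> \<theta>0 \<xi> \<theta>'' \<le> lasso_obj \<Sigma> \<theta>0 \<xi> \<theta>" by blast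
      hence "qf \<Sigma> (\<theta>'' - \<theta>) \<le> 0" using ineq[of \<theta>''] by linarith
      hence "\<theta>'' - \<theta> = 0"
      proof (rule contrapos_pp)
        assume "\<theta>'' - \<theta> \<noteq> 0"
        hence "0 < qf \<Sigma> (\<theta>'' - \<theta>)" using assms unfolding pos_def_def qf_def by blast
        thus "\<not> qf \<Sigma> (\<theta>'' - \<theta>) \<le> 0" by simp
      qed
      thus "\<theta>'' = \<theta>" by simp
    qed
    have sv: "sign_vec \<theta> = v0" using sg by (simp add: sign_vec_def vec_eq_iff)
    have "\<forall>i. (\<theta>$i \<noteq> 0) = (v0$i \<noteq> 0)" using sg sgn_zero_iff by metis
    hence "supp \<theta> = supp v0" by (simp add: supp_def)
    with sv li show ?thesis by simp
  qed
  have vals: "v0 $ i \<in> {-1, 0, 1}" for i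
    by (auto simp: v0_def sgn_if)
  show ?thesis
    unfolding S_def[symmetric]
    apply (rule exI[of _ \<xi>0], rule exI[of _ T0], rule exI[of _ v0])
    using xi0pos vals main memT0
    by (auto simp: T0_def v0_def \<xi>0_def f_def)
qed

end
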